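(* Fix the signal accuracy $\phi\in(\tfrac12,1]$, a type distribution $F$ satisfying the assumptions below, and designer preferences $(A_1,A_0,B_1,B_0)\in\mathbb{R}_+^4$. Then, as the reward $r\to\infty$, the designer can attain an expected payoff arbitrarily close to $\max\{A_1,A_0,B_1,B_0\}$: for every $\varepsilon>0$ there exists $R$ such that for every $r>R$ there is a classifier $\delta\in[0,1]^2$ with $EU_D(\delta\mid r)\ge \max\{A_1,A_0,B_1,B_0\}-\varepsilon$.
   Context: A unit mass of individuals $i\in[0,1]$ each privately knows a cost $\gamma_i\in\mathbb{R}$ of choosing behavior $\beta_i=1$ (compliance) rather than $\beta_i=0$. Costs are distributed in the population according to a continuously differentiable CDF $F$ whose density $f$ is log-concave with full support on $\mathbb{R}$. A designer chooses a classifier $\delta=(\delta_1,\delta_0)\in[0,1]^2$. Each individual's behavior generates a signal $s_i\in\{0,1\}$ with $\Pr[s_i=\beta_i]=\phi$, and the classifier assigns a decision $d_i\in\{0,1\}$ with $\Pr[d_i=s_i\mid s_i]=\delta_{s_i}$. An individual with $d_i=1$ receives reward $r\in\mathbb{R}$ and incurs cost $\gamma_i$ if $\beta_i=1$. Let $\rho(\delta,\phi)=(\delta_1+\delta_0-1)(2\phi-1)$. Given $(\delta,r)$, individual $i$ chooses $\beta_i=1$ iff $\gamma_i\le r\rho(\delta,\phi)$, so the prevalence of compliance is $\pi=\pi_F(\delta,\phi,r)=F(r\rho(\delta,\phi))$. The designer receives $A_1$ from a complier with $d_i=1$, $A_0$ from a complier with $d_i=0$, $B_1$ from a non-complier with $d_i=0$,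 and $B_0$ from a non-complier with $d_i=1$; the designer's expected payoff is $EU_D(\delta\mid r)=\pi\big[\phi(A_1\delta_1+A_0(1-\delta_1))+(1-\phi)(A_0\delta_0+A_1(1-\delta_0))\big]+(1-\pi)\big[\phi(B_1\delta_0+B_0(1-\delta_0))+(1-\phi)(B_0\delta_1+B_1(1-\delta_1))\big]$. *)

theory Defs
  imports "HOL-Analysis.Analysis"
begin

definition admissible_cdf :: "(real \<Rightarrow> real) \<Rightarrow> (real \<Rightarrow> real) \<Rightarrow> bool" where
  "admissible_cdf F f \<longleftrightarrow>
     (\<forall>x. (F has_real_derivative f x) (at x)) \<and>
     continuous_on UNIV f \<and>
     mono F \<and>
     (F \<longlongrightarrow> 0) at_bot \<and> (F \<longlongrightarrow> 1) at_top \<and>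
     (\<forall>x. f x > 0) \<and>
     concave_on UNIV (\<lambda>x. ln (f x))"

definition rho :: "real \<Rightarrow> real \<Rightarrow> real \<Rightarrow> real" where
  "rho d1 d0 \<phi> = (d1 + d0 - 1) * (2 * \<phi> - 1)"

definition prevalence :: "(real \<Rightarrow> real) \<Rightarrow> real \<Rightarrow> real \<Rightarrow> real \<Rightarrow> real \<Rightarrow> real" where
  "prevalence F d1 d0 \<phi> r = F (r * rho d1 d0 \<phi>)"

definition EU_D :: "(real \<Rightarrow> real) \<Rightarrow> real \<Rightarrow> real \<Rightarrow> real \<Rightarrow> real \<Rightarrow> real \<Rightarrow> real
    \<Rightarrow> real \<Rightarrow> real \<Rightarrow> real" where
  "EU_D F \<phi> A1 A0 B1 B0 d1 d0 r =
     (let \<pi> = prevalence F d1 d0 \<phi> r in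
       \<pi> * (\<phi> * (A1 * d1 + A0 * (1 - d1)) + (1 - \<phi>) * (A0 * d0 + A1 * (1 - d0)))
     + (1 - \<pi>) * (\<phi> * (B1 * d0 + B0 * (1 - d0)) + (1 - \<phi>) * (B0 * d1 + B1 * (1 - d1))))"

end

theory Submission
  imports Defs
begin

lemma combA:
  fixes p X Y M e d :: real
  assumes "0 \<le> p" "p \<le> 1" "0 \<le> Y" "X \<ge> M - e/2" "p \<ge> 1 - d" "d*M \<le> e/2" "M \<ge> 0" "e > 0"
  shows "p*X + (1-p)*Y \<ge> M - e"
proof -
  have "(1-p)*Y \<ge> 0" using assms by simp
  moreover have "p*X \<ge> p*(M - e/2)" using assms mult_left_mono by blast
  moreover have "p*(e/2) \<le> e/2" using assms by (simp add: mult_left_le_one_le)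
  moreover have "p*M \<ge> (1-d)*M" using assms mult_right_mono by blast
  moreover have "p*(M - e/2) = p*M - p*(e/2)" by (simp add: algebra_simps)
  moreover have "(1-d)*M = M - d*M" by (simp add: algebra_simps)
  ultimately show ?thesis using assms by linarith
qed

lemma combB:
  fixes p X Y M e d :: real
  assumes "0 \<le> p" "p \<le> 1" "0 \<le> X" "Y \<ge> M - e/2" "p \<le> d" "d*M \<le> e/2" "M \<ge> 0" "e > 0"
  shows "p*X + (1-p)*Y \<ge> M - e"
proof -
  have "(1-p)*Y + (1-(1-p))*X \<ge> M - e" using combA[where p="1-p" and X=Y and Y=X and M=M and e=e and d=d] assms by simp
  then show ?thesis by (simp add: algebra_simps)
qed

lemma F_bounds:
  assumes "admissible_cdf F f"
  shows "0 \<le> F x" "F x \<le> 1"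
proof -
  have m: "mono F" and t1: "(F \<longlongrightarrow> 1) at_top" and t0: "(F \<longlongrightarrow> 0) at_bot"
    using assms unfolding admissible_cdf_def by auto
  have "eventually (\<lambda>y. F x \<le> F y) at_top"
    using eventually_ge_at_top[of x] by eventually_elim (use m in \<open>auto dest: monoD\<close>)
  then show "F x \<le> 1" using tendsto_le[OF trivial_limit_at_top_linorder t1 tendsto_const] by blast
  have "eventually (\<lambda>y. F y \<le> F x) at_bot"
    using eventually_le_at_bot[of x] by eventually_elim (use m in \<open>auto dest: monoD\<close>)
  then show "0 \<le> F x" using tendsto_le[OF trivial_limit_at_bot_linorder tendsto_const t0] by blast
qed

theorem proposition1:
  fixes F f :: "real \<Rightarrow> real" and \<phi> A1 A0 B1 B0 :: real
  assumes "1/2 < \<phi>" "\<phi> \<le> 1"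
    and "admissible_cdf F f"
    and "0 \<le> A1" "0 \<le> A0" "0 \<le> B1" "0 \<le> B0"
  shows "\<forall>\<epsilon>>0. \<exists>R. \<forall>r>R. \<exists>d1 d0.
           d1 \<in> {0..1} \<and> d0 \<in> {0..1} \<and>
           EU_D F \<phi> A1 A0 B1 B0 d1 d0 r \<ge> Max {A1, A0, B1, B0} - \<epsilon>"
proof (intro allI impI)
  fix e :: real assume e: "e > 0"
  define M where "M = Max {A1, A0, B1, B0}"
  have Mdef: "M = max A1 (max A0 (max B1 B0))" unfolding M_def by simp
  have M0: "M \<ge> 0" using assms(4) Mdef by simp
  define d where "d = e / (2*(M+1))"
  have d0: "d > 0" using e M0 by (simp add: d_def)
  have dM: "d*M \<le> e/2"
  proof -
    have "d*M \<le> d*(M+1)" using d0 by simp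
    also have "\<dots> = e/2" using M0 by (simp add: d_def field_simps)
    finally show ?thesis .
  qed
  define \<eta> where "\<eta> = min (1/2) d"
  have eta: "0 < \<eta>" "\<eta> \<le> 1/2" "\<eta> \<le> d" using d0 by (auto simp: \<eta>_def)
  have etaM: "\<eta>*M \<le> e/2" using dM eta M0 mult_right_mono[of \<eta> d M] by linarith
  define c where "c = 2*\<phi> - 1"
  have c: "c > 0" "c \<le> 1" using assms(1,2) by (auto simp: c_def)
  have t1: "(F \<longlongrightarrow> 1) at_top" and t0: "(F \<longlongrightarrow> 0) at_bot"
    using assms(3) unfolding admissible_cdf_def by auto
  have "eventually (\<lambda>x. 1 - d < F x) at_top" using order_tendstoD(1)[OF t1] d0 by simp
  then obtain N1 where N1: "\<And>x. x \<ge> N1 \<Longrightarrow> F x > 1 - d" by (auto simp: eventually_at_top_linorder)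
  have "eventually (\<lambda>x. F x < d) at_bot" using order_tendstoD(2)[OF t0] d0 by simp
  then obtain N0 where N0: "\<And>x. x \<le> N0 \<Longrightarrow> F x < d" by (auto simp: eventually_at_bot_linorder)
  define R where "R = (\<bar>N1\<bar> + \<bar>N0\<bar>) / (\<eta>*c)"
  have ec: "\<eta>*c > 0" using eta c by simp
  have big: "r*(\<eta>*c) > \<bar>N1\<bar> + \<bar>N0\<bar>" if "r > R" for r
    using that ec unfolding R_def by (simp add: pos_divide_less_eq)
  have Fb: "0 \<le> F x" "F x \<le> 1" for x using F_bounds[OF assms(3)] by auto
  have phi: "0 \<le> 1 - \<phi>" "0 \<le> \<phi>" using assms(1,2) by auto
  show "\<exists>R. \<forall>r>R. \<exists>d1 d0. d1 \<in> {0..1} \<and> d0 \<in> {0..1} \<and> EU_D F \<phi> A1 A0 B1 B0 d1 d0 r \<ge> Max {A1, A0, B1, B0} - e"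
  proof (rule exI[of _ R], intro allI impI)
    fix r assume r: "r > R"
    have hi: "r*(\<eta>*c) \<ge> N1" and lo: "- (r*(\<eta>*c)) \<le> N0" using big[OF r] by linarith+
    show "\<exists>d1 d0. d1 \<in> {0..1} \<and> d0 \<in> {0..1} \<and> EU_D F \<phi> A1 A0 B1 B0 d1 d0 r \<ge> Max {A1, A0, B1, B0} - e"
    proof -
      have Mc: "M = A1 \<or> M = A0 \<or> M = B1 \<or> M = B0" unfolding Mdef by linarith
      have Mge: "A1 \<le> M" "A0 \<le> M" "B1 \<le> M" "B0 \<le> M" unfolding Mdef by auto
      have pA: "F (r * rho d1 d0 \<phi>) \<ge> 1 - d" if "d1 + d0 - 1 = \<eta>" for d1 d0
      proof -
        have "r * rho d1 d0 \<phi> = r*(\<eta>*c)" using that by (simp add: rho_def c_def)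
        then show ?thesis using N1[OF hi] by (metis less_imp_le)
      qed
      have pB: "F (r * rho d1 d0 \<phi>) \<le> d" if "d1 + d0 - 1 = - \<eta>" for d1 d0
      proof -
        have "r * rho d1 d0 \<phi> = - (r*(\<eta>*c))" using that by (simp add: rho_def c_def)
        then show ?thesis using N0[OF lo] by (metis less_imp_le)
      qed
      have EU: "EU_D F \<phi> A1 A0 B1 B0 d1 d0 r = F (r * rho d1 d0 \<phi>) * (\<phi> * (A1 * d1 + A0 * (1 - d1)) + (1 - \<phi>) * (A0 * d0 + A1 * (1 - d0)))
     + (1 - F (r * rho d1 d0 \<phi>)) * (\<phi> * (B1 * d0 + B0 * (1 - d0)) + (1 - \<phi>) * (B0 * d1 + B1 * (1 - d1)))" for d1 d0
        by (simp add: EU_D_def Let_def prevalence_def)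
      have nn: "0 \<le> \<phi> * (A1 * d1 + A0 * (1 - d1)) + (1 - \<phi>) * (A0 * d0 + A1 * (1 - d0))"
               "0 \<le> \<phi> * (B1 * d0 + B0 * (1 - d0)) + (1 - \<phi>) * (B0 * d1 + B1 * (1 - d1))"
        if "d1 \<in> {0..1}" "d0 \<in> {0..1}" for d1 d0
        using that phi assms(4-7) by (auto intro!: add_nonneg_nonneg mult_nonneg_nonneg)
      from Mc show ?thesis
      proof (elim disjE)
        assume h: "M = A1"
        have X: "\<phi> * (A1 * 1 + A0 * (1 - 1)) + (1 - \<phi>) * (A0 * \<eta> + A1 * (1 - \<eta>)) \<ge> M - e/2"
        proof -
          have "(1-\<phi>)*(\<eta>*A1) \<le> \<eta>*A1" using phi eta assms(4) by (simp add: mult_left_le_one_le)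
          moreover have "(1-\<phi>)*(A0*\<eta>) \<ge> 0" using phi eta assms(5) by simp
          ultimately show ?thesis using h etaM by (simp add: algebra_simps)
        qed
        show ?thesis
        proof -
          have pp: "F (r * rho 1 \<eta> \<phi>) \<ge> 1 - d" by (rule pA) simp
          have nv: "0 \<le> \<phi> * (B1 * (\<eta>) + B0 * (1 - (\<eta>))) + (1 - \<phi>) * (B0 * (1) + B1 * (1 - (1)))"
            by (rule nn(2)) (use eta in auto)
          note res = combA[OF Fb nv X pp dM M0 e]
          have g: "EU_D F \<phi> A1 A0 B1 B0 (1) (\<eta>) r \<ge> M - e" using res by (simp add: EU)
          show ?thesis apply (rule exI[of _ "1"], rule exI[of _ "\<eta>"]) using eta g Mdef by simp
        qed
      next
        assume h: "M = A0"
        have X: "\<phi> * (A1 * \<eta> + A0 * (1 - \<eta>)) + (1 - \<phi>) * (A0 * 1 + A1 * (1 - 1)) \<ge> M - e/2"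
        proof -
          have "\<phi>*(\<eta>*A0) \<le> \<eta>*A0" using phi assms(2) eta assms(5) by (simp add: mult_left_le_one_le)
          moreover have "\<phi>*(A1*\<eta>) \<ge> 0" using phi eta assms(4) by simp
          ultimately show ?thesis using h etaM by (simp add: algebra_simps)
        qed
        show ?thesis
        proof -
          have pp: "F (r * rho \<eta> 1 \<phi>) \<ge> 1 - d" by (rule pA) simp
          have nv: "0 \<le> \<phi> * (B1 * (1) + B0 * (1 - (1))) + (1 - \<phi>) * (B0 * (\<eta>) + B1 * (1 - (\<eta>)))"
            by (rule nn(2)) (use eta in auto)
          note res = combA[OF Fb nv X pp dM M0 e]
          have g: "EU_D F \<phi> A1 A0 B1 B0 (\<eta>) (1) r \<ge> M - e" using res by (simp add: EU)
          show ?thesis apply (rule exI[of _ "\<eta>"], rule exI[of _ "1"]) using eta g Mdef by simp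
        qed
      next
        assume h: "M = B1"
        have Y: "\<phi> * (B1 * (1-\<eta>) + B0 * (1 - (1-\<eta>))) + (1 - \<phi>) * (B0 * 0 + B1 * (1 - 0)) \<ge> M - e/2"
        proof -
          have "\<phi>*(\<eta>*B1) \<le> \<eta>*B1" using phi assms(2) eta assms(6) by (simp add: mult_left_le_one_le)
          moreover have "\<phi>*(B0*\<eta>) \<ge> 0" using phi eta assms(7) by simp
          ultimately show ?thesis using h etaM by (simp add: algebra_simps)
        qed
        show ?thesis
        proof -
          have pp: "F (r * rho 0 (1-\<eta>) \<phi>) \<le> d" by (rule pB) simp
          have nv: "0 \<le> \<phi> * (A1 * (0) + A0 * (1 - (0))) + (1 - \<phi>) * (A0 * (1-\<eta>) + A1 * (1 - (1-\<eta>)))"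
            by (rule nn(1)) (use eta in auto)
          note res = combB[OF Fb nv Y pp dM M0 e]
          have g: "EU_D F \<phi> A1 A0 B1 B0 (0) (1-\<eta>) r \<ge> M - e" using res by (simp add: EU)
          show ?thesis apply (rule exI[of _ "0"], rule exI[of _ "1-\<eta>"]) using eta g Mdef by simp
        qed
      next
        assume h: "M = B0"
        have Y: "\<phi> * (B1 * 0 + B0 * (1 - 0)) + (1 - \<phi>) * (B0 * (1-\<eta>) + B1 * (1 - (1-\<eta>))) \<ge> M - e/2"
        proof -
          have "(1-\<phi>)*(\<eta>*B0) \<le> \<eta>*B0" using phi eta assms(7) by (simp add: mult_left_le_one_le)
          moreover have "(1-\<phi>)*(B1*\<eta>) \<ge> 0" using phi eta assms(6) by simp
          ultimately show ?thesis using h etaM by (simp add: algebra_simps)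
        qed
        show ?thesis
        proof -
          have pp: "F (r * rho (1-\<eta>) 0 \<phi>) \<le> d" by (rule pB) simp
          have nv: "0 \<le> \<phi> * (A1 * (1-\<eta>) + A0 * (1 - (1-\<eta>))) + (1 - \<phi>) * (A0 * (0) + A1 * (1 - (0)))"
            by (rule nn(1)) (use eta in auto)
          note res = combB[OF Fb nv Y pp dM M0 e]
          have g: "EU_D F \<phi> A1 A0 B1 B0 (1-\<eta>) (0) r \<ge> M - e" using res by (simp add: EU)
          show ?thesis apply (rule exI[of _ "1-\<eta>"], rule exI[of _ "0"]) using eta g Mdef by simp
        qed
      qed
    qed
  qed
qed

end
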